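(* Let $G$ be a signed digraph and let $i\neq j$ be vertices such that $G$ has an arc from $i$ to $j$ and $d^{\mathrm{in}}_G(i)=d^{\mathrm{out}}_G(i)=d^{\mathrm{in}}_G(j)=1$. Let $H$ be the spanning subgraph obtained from $G$ by removing this arc, and let $h:Y\to Y$ be any degree-bounded finite dynamical system on $H$. Then there is no degree-bounded finite dynamical system $f:X\to X$ on $G$ that converges toward $h$ (in any number of steps).
   Context: A finite dynamical system (FDS) with $n$ components is a map $f=(f_1,\dots,f_n):X\to X$ where $X=X_1\times\cdots\times X_n$ and each $X_i$ is a nonempty finite interval of integers; $f^k$ denotes the $k$-fold composition. For FDSs $f:X\to X$ and $h:Y\to Y$ with $n$ components, $f$ converges toward $h$ in $k$ steps if $f^k(X)\subseteq h(Y)\subseteq Y\subseteq X$ and $f(x)=h(x)$ for all $x\in Y$. A signed digraph is a pair $G=(V,E)$ with $E\subseteq V\times V\times\{+,-\}$; $(j,i,s)\in E$ is an arc from $j$ to $i$ of sign $s$ (loops and parallel arcs of opposite sign allowed). The in-degree $d^{\mathrm{in}}_G(i)$ is the number of arcs entering $i$ and the out-degree $d^{\mathrm{out}}_G(i)$ the number of arcs leaving $i$ (positive and negative arcs counted separately). A spanning subgraph has the same vertex set and a subset of the arcs. The interaction graph of an FDS $f$ is the signed digraph on $\{1,\dots,n\}$ with a positive (resp. negative) arc from $j$ to $i$ iff there is $x\in X$ with $x_j<\max(X_j)$ such that $f_i(x+e_j)-f_i(x)$ is positive (resp. negative), $e_j$ the $j$-th unit vector. $f$ is an FDS on $G$ if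 $G$ is its interaction graph. $f$ is degree-bounded if, with $G$ its interaction graph, for every $i$: $|X_i|=2$ if $d^{\mathrm{out}}_G(i)=0<d^{\mathrm{in}}_G(i)$, and $|X_i|\le d^{\mathrm{out}}_G(i)+1$ otherwise. *)

theory Defs
  imports Main
begin

definition box :: "nat \<Rightarrow> (nat \<Rightarrow> int) \<Rightarrow> (nat \<Rightarrow> int) \<Rightarrow> (nat \<Rightarrow> int) set" where
  "box n lo hi = {x. (\<forall>i<n. lo i \<le> x i \<and> x i \<le> hi i) \<and> (\<forall>i\<ge>n. x i = 0)}"

definition is_FDS :: "nat \<Rightarrow> (nat \<Rightarrow> int) \<Rightarrow> (nat \<Rightarrow> int) \<Rightarrow> ((nat \<Rightarrow> int) \<Rightarrow> (nat \<Rightarrow> int)) \<Rightarrow> bool" where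
  "is_FDS n lo hi f \<longleftrightarrow> (\<forall>i<n. lo i \<le> hi i) \<and> (\<forall>x\<in>box n lo hi. f x \<in> box n lo hi)"

(* signed digraph on vertex set {0..<n}: arcs (j, i, s), s = True for +, False for - *)
definition signed_digraph :: "nat \<Rightarrow> (nat \<times> nat \<times> bool) set \<Rightarrow> bool" where
  "signed_digraph n E \<longleftrightarrow> E \<subseteq> {..<n} \<times> {..<n} \<times> UNIV"

definition indeg :: "(nat \<times> nat \<times> bool) set \<Rightarrow> nat \<Rightarrow> nat" where
  "indeg E i = card {(j, s). (j, i, s) \<in> E}"

definition outdeg :: "(nat \<times> nat \<times> bool) set \<Rightarrow> nat \<Rightarrow> nat" where
  "outdeg E i = card {(k, s). (i, k, s) \<in> E}"

definition unit_vec :: "nat \<Rightarrow> nat \<Rightarrow> int" where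
  "unit_vec j = (\<lambda>k. if k = j then 1 else 0)"

definition interaction_graph ::
  "nat \<Rightarrow> (nat \<Rightarrow> int) \<Rightarrow> (nat \<Rightarrow> int) \<Rightarrow> ((nat \<Rightarrow> int) \<Rightarrow> (nat \<Rightarrow> int)) \<Rightarrow> (nat \<times> nat \<times> bool) set" where
  "interaction_graph n lo hi f =
     {(j, i, s). j < n \<and> i < n \<and>
        (\<exists>x\<in>box n lo hi. x j < hi j \<and>
           (if s then f (\<lambda>k. x k + unit_vec j k) i - f x i > 0 else f (\<lambda>k. x k + unit_vec j k) i - f x i < 0))}"

definition degree_bounded ::
  "nat \<Rightarrow> (nat \<Rightarrow> int) \<Rightarrow> (nat \<Rightarrow> int) \<Rightarrow> ((nat \<Rightarrow> int) \<Rightarrow> (nat \<Rightarrow> int)) \<Rightarrow> bool" where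
  "degree_bounded n lo hi f \<longleftrightarrow>
     (let G = interaction_graph n lo hi f in
      \<forall>i<n. (if outdeg G i = 0 \<and> 0 < indeg G i
             then hi i - lo i + 1 = 2
             else hi i - lo i + 1 \<le> int (outdeg G i) + 1))"

definition converges_toward ::
  "nat \<Rightarrow> (nat \<Rightarrow> int) \<Rightarrow> (nat \<Rightarrow> int) \<Rightarrow> ((nat \<Rightarrow> int) \<Rightarrow> (nat \<Rightarrow> int)) \<Rightarrow>
   (nat \<Rightarrow> int) \<Rightarrow> (nat \<Rightarrow> int) \<Rightarrow> ((nat \<Rightarrow> int) \<Rightarrow> (nat \<Rightarrow> int)) \<Rightarrow> nat \<Rightarrow> bool" where
  "converges_toward n loX hiX f loY hiY h k \<longleftrightarrow>
     (f ^^ k) ` box n loX hiX \<subseteq> h ` box n loY hiY \<and>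
     h ` box n loY hiY \<subseteq> box n loY hiY \<and>
     box n loY hiY \<subseteq> box n loX hiX \<and>
     (\<forall>x\<in>box n loY hiY. f x = h x)"

end

theory Submission
  imports Defs
begin

lemma inv_coord:
  assumes H: "\<And>x k. x \<in> box n lo hi \<Longrightarrow> k < n \<Longrightarrow> k \<noteq> i \<Longrightarrow> x k < hi k \<Longrightarrow>
                 g (\<lambda>m. x m + unit_vec k m) = g x"
  shows "x \<in> box n lo hi \<Longrightarrow> k < n \<Longrightarrow> k \<noteq> i \<Longrightarrow> g (x(k := lo k)) = g x"
proof (induction "nat (x k - lo k)" arbitrary: x)
  case 0
  then have "x k = lo k" by (auto simp: box_def)
  then show ?case by (metis fun_upd_triv)
next
  case (Suc d)
  define x' where "x' = x(k := x k - 1)"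
  have xk: "lo k < x k" "x k \<le> hi k" using Suc by (auto simp: box_def)
  have x'b: "x' \<in> box n lo hi" using Suc(3) xk Suc(4) by (auto simp: box_def x'_def)
  have e: "(\<lambda>m. x' m + unit_vec k m) = x" by (auto simp: x'_def unit_vec_def)
  have "g x = g x'" using H[OF x'b Suc(4) Suc(5)] xk e by (simp add: x'_def)
  moreover have "g (x'(k := lo k)) = g x'"
    using Suc(1)[of x'] Suc(2) x'b Suc(4,5) by (simp add: x'_def)
  moreover have "x'(k := lo k) = x(k := lo k)" by (simp add: x'_def)
  ultimately show ?case by simp
qed

lemma inv_nf:
  assumes H: "\<And>x k. x \<in> box n lo hi \<Longrightarrow> k < n \<Longrightarrow> k \<noteq> i \<Longrightarrow> x k < hi k \<Longrightarrow>
                 g (\<lambda>m. x m + unit_vec k m) = g x"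
    and x: "x \<in> box n lo hi"
  shows "m \<le> n \<Longrightarrow> (\<lambda>k. if k < m \<and> k \<noteq> i then lo k else x k) \<in> box n lo hi \<and>
            g (\<lambda>k. if k < m \<and> k \<noteq> i then lo k else x k) = g x"
proof (induction m)
  case 0
  then show ?case using x by simp
next
  case (Suc m)
  let ?p = "\<lambda>k. if k < m \<and> k \<noteq> i then lo k else x k"
  have IH: "?p \<in> box n lo hi" "g ?p = g x" using Suc by auto
  show ?case
  proof (cases "m = i")
    case True
    have "(\<lambda>k. if k < Suc m \<and> k \<noteq> i then lo k else x k) = ?p" using True by (auto simp: less_Suc_eq)
    then show ?thesis using IH by simp
  next
    case False
    have eq: "(\<lambda>k. if k < Suc m \<and> k \<noteq> i then lo k else x k) = ?p(m := lo m)"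
      using False by (auto simp: less_Suc_eq)
    have "lo m \<le> x m" "x m \<le> hi m" using x Suc(2) by (auto simp: box_def)
    hence "lo m \<le> hi m" by simp
    hence "?p(m := lo m) \<in> box n lo hi" using IH(1) Suc(2) by (auto simp: box_def)
    moreover have "g (?p(m := lo m)) = g ?p"
      using inv_coord[where n=n and lo=lo and hi=hi and i=i and g=g and x="?p" and k=m, OF H] IH(1) Suc(2) False by simp
    ultimately show ?thesis using eq IH by simp
  qed
qed

lemma inv_eq:
  assumes H: "\<And>x k. x \<in> box n lo hi \<Longrightarrow> k < n \<Longrightarrow> k \<noteq> i \<Longrightarrow> x k < hi k \<Longrightarrow>
                 g (\<lambda>m. x m + unit_vec k m) = g x"
    and x: "x \<in> box n lo hi" and y: "y \<in> box n lo hi" and xy: "x i = y i"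
  shows "g x = g y"
proof -
  have a: "g (\<lambda>k. if k < n \<and> k \<noteq> i then lo k else x k) = g x" using inv_nf[OF H x] by simp
  have b: "g (\<lambda>k. if k < n \<and> k \<noteq> i then lo k else y k) = g y" using inv_nf[OF H y] by simp
  have "(\<lambda>k. if k < n \<and> k \<noteq> i then lo k else x k) = (\<lambda>k. if k < n \<and> k \<noteq> i then lo k else y k)"
  proof
    fix k show "(if k < n \<and> k \<noteq> i then lo k else x k) = (if k < n \<and> k \<noteq> i then lo k else y k)"
      using x y xy by (cases "k < n") (auto simp: box_def)
  qed
  then show ?thesis using a b by simp
qed

theorem mainTheorem4:
  fixes n :: nat and E :: "(nat \<times> nat \<times> bool) set" and i j :: nat and s :: bool
    and loY hiY :: "nat \<Rightarrow> int" and h :: "(nat \<Rightarrow> int) \<Rightarrow> (nat \<Rightarrow> int)"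
  assumes "signed_digraph n E"
    and "i < n" and "j < n" and "i \<noteq> j"
    and "(i, j, s) \<in> E"
    and "indeg E i = 1" and "outdeg E i = 1" and "indeg E j = 1"
    and "is_FDS n loY hiY h"
    and "interaction_graph n loY hiY h = E - {(i, j, s)}"
    and "degree_bounded n loY hiY h"
  shows "\<not> (\<exists>loX hiX f k. is_FDS n loX hiX f \<and> interaction_graph n loX hiX f = E \<and>
             degree_bounded n loX hiX f \<and> converges_toward n loX hiX f loY hiY h k)"
proof
  assume "\<exists>loX hiX f k. is_FDS n loX hiX f \<and> interaction_graph n loX hiX f = E \<and>
             degree_bounded n loX hiX f \<and> converges_toward n loX hiX f loY hiY h k"
  then obtain loX hiX f k where fF: "is_FDS n loX hiX f" and fG: "interaction_graph n loX hiX f = E"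
    and fD: "degree_bounded n loX hiX f" and fC: "converges_toward n loX hiX f loY hiY h k" by blast
  have sub: "box n loY hiY \<subseteq> box n loX hiX" and fh: "\<forall>x\<in>box n loY hiY. f x = h x"
    using fC by (auto simp: converges_toward_def)
  have inj: "{(k, s'). (k, j, s') \<in> E} = {(i, s)}"
  proof -
    have "card {(k, s'). (k, j, s') \<in> E} = 1" using assms(8) by (simp add: indeg_def)
    then obtain a where "{(k, s'). (k, j, s') \<in> E} = {a}" using card_1_singletonE by blast
    moreover have "(i, s) \<in> {(k, s'). (k, j, s') \<in> E}" using assms(5) by simp
    ultimately show ?thesis by auto
  qed
  have outi: "{(k, s'). (i, k, s') \<in> E} = {(j, s)}"
  proof -
    have "card {(k, s'). (i, k, s') \<in> E} = 1" using assms(7) by (simp add: outdeg_def)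
    then obtain a where "{(k, s'). (i, k, s') \<in> E} = {a}" using card_1_singletonE by blast
    moreover have "(j, s) \<in> {(k, s'). (i, k, s') \<in> E}" using assms(5) by simp
    ultimately show ?thesis by auto
  qed
  have outH: "outdeg (E - {(i, j, s)}) i = 0"
  proof -
    have "{(k, s'). (i, k, s') \<in> E - {(i, j, s)}} = {}" using outi by blast
    then show ?thesis unfolding outdeg_def by (metis card.empty)
  qed
  have inH: "indeg (E - {(i, j, s)}) i = 1"
  proof -
    have "{(k, s'). (k, i, s') \<in> E - {(i, j, s)}} = {(k, s'). (k, i, s') \<in> E}" using assms(4) by blast
    then show ?thesis using assms(6) by (simp add: indeg_def)
  qed
  have Yi: "hiY i - loY i + 1 = 2"
    using assms(11) assms(2) outH inH by (simp add: degree_bounded_def Let_def assms(10))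
  have Xi: "hiX i - loX i + 1 \<le> 2"
  proof -
    have "\<forall>i<n. (if outdeg E i = 0 \<and> 0 < indeg E i then hiX i - loX i + 1 = 2
             else hiX i - loX i + 1 \<le> int (outdeg E i) + 1)"
      using fD by (simp add: degree_bounded_def Let_def fG)
    then have "(if outdeg E i = 0 \<and> 0 < indeg E i then hiX i - loX i + 1 = 2
             else hiX i - loX i + 1 \<le> int (outdeg E i) + 1)" using assms(2) by blast
    then show ?thesis using assms(7) by simp
  qed
  have loY: "\<forall>k<n. loY k \<le> hiY k" using assms(9) by (simp add: is_FDS_def)
  define y0 where "y0 = (\<lambda>k. if k < n then loY k else 0)"
  define y1 where "y1 = (\<lambda>m. y0 m + unit_vec i m)"
  have y0b: "y0 \<in> box n loY hiY" using loY by (auto simp: box_def y0_def)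
  have y1b: "y1 \<in> box n loY hiY" using loY Yi assms(2)
    by (auto simp: box_def y0_def y1_def unit_vec_def)
  have y0x: "y0 \<in> box n loX hiX" using sub y0b by auto
  have y1x: "y1 \<in> box n loX hiX" using sub y1b by auto
  have "loX i \<le> y0 i" "y1 i \<le> hiX i" using y0x y1x assms(2) by (auto simp: box_def)
  hence loeq: "loX i = loY i" and hieq: "hiX i = loY i + 1" using Xi Yi assms(2)
    by (auto simp: y0_def y1_def unit_vec_def)
  have H: "\<And>x k. x \<in> box n loX hiX \<Longrightarrow> k < n \<Longrightarrow> k \<noteq> i \<Longrightarrow> x k < hiX k \<Longrightarrow>
                 (\<lambda>z. z j) (f (\<lambda>m. x m + unit_vec k m)) = (\<lambda>z. z j) (f x)"
  proof (rule ccontr)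
    fix x k assume a: "x \<in> box n loX hiX" "k < n" "k \<noteq> i" "x k < hiX k"
      "(\<lambda>z. z j) (f (\<lambda>m. x m + unit_vec k m)) \<noteq> (\<lambda>z. z j) (f x)"
    then have "f (\<lambda>m. x m + unit_vec k m) j - f x j > 0 \<or> f (\<lambda>m. x m + unit_vec k m) j - f x j < 0"
      by auto
    then obtain b where "(k, j, b) \<in> interaction_graph n loX hiX f"
      unfolding interaction_graph_def using a assms(3)
      by (metis (mono_tags, lifting) case_prodI mem_Collect_eq)
    then have "(k, b) \<in> {(k, s'). (k, j, s') \<in> E}" using fG by simp
    then show False using inj a(3) by simp
  qed
  have "(i, j, s) \<in> interaction_graph n loX hiX f" using fG assms(5) by simp
  then obtain x where xb: "x \<in> box n loX hiX" and xi: "x i < hiX i"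
    and xd: "f (\<lambda>k. x k + unit_vec i k) j \<noteq> f x j"
    unfolding interaction_graph_def by (auto split: if_splits)
  have xlo: "x i = loY i" using xb xi assms(2) loeq hieq by (auto simp: box_def)
  have x1b: "(\<lambda>k. x k + unit_vec i k) \<in> box n loX hiX" using xb xi assms(2)
    by (auto simp: box_def unit_vec_def)
  have e0: "f x j = f y0 j"
    using inv_eq[where g="\<lambda>z. f z j", OF H xb y0x] xlo assms(2) by (simp add: y0_def)
  have e1: "f (\<lambda>k. x k + unit_vec i k) j = f y1 j"
    using inv_eq[where g="\<lambda>z. f z j", OF H x1b y1x] xlo assms(2)
    by (simp add: y0_def y1_def unit_vec_def)
  have hd: "h y1 j \<noteq> h y0 j" using xd e0 e1 fh y0b y1b by simp
  have y0i: "y0 i < hiY i" using Yi assms(2) by (simp add: y0_def)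
  have "h y1 j - h y0 j > 0 \<or> h y1 j - h y0 j < 0" using hd by auto
  then obtain b where "(i, j, b) \<in> interaction_graph n loY hiY h"
    unfolding interaction_graph_def y1_def using y0b y0i assms(2,3)
    by (metis (mono_tags, lifting) case_prodI mem_Collect_eq)
  then have "(i, j, b) \<in> E" "(i, j, b) \<noteq> (i, j, s)" using assms(10) by auto
  then have "(i, b) \<in> {(k, s'). (k, j, s') \<in> E}" "b \<noteq> s" by auto
  then show False using inj by simp
qed

end
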